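(* For each $n$, let $X_1,\dots,X_n$ be i.i.d. real random variables and let $s=s_n$ be a real-valued permutation-symmetric function of $n$ arguments. Conditionally on the data, let $I_1,\dots,I_n$ be i.i.d. uniform on $\{1,\dots,n\}$, $X_i^*=X_{I_i}$, $s^*=s(X_1^*,\dots,X_n^* )$, $w_j^*=\#\{i:I_i=j\}$, and let $\mathbb{E}_*,\mathrm{Var}_*$ denote expectation and variance over this resampling given the data. Let $e_i=\mathbb{E}_*[s^*\mid I_1=i]$, $s_0=\mathbb{E}_*[s^*]$, and let $l^*$ be the $L^2$ (resampling distribution) orthogonal projection of $s^*-s_0$ onto the linear span of $w_1^*,\dots,w_n^*$. Let $\rho$ be the correlation coefficient (over the distribution of the data) between $e_1$ and $e_2$. Assume $e_1$ has finite positive variance and $\mathrm{Var}(\mathbb{E}_*[s^*])>0$ for each $n$. Then $$\lim_{n\to\infty}\frac{\mathbb{E}[\mathrm{Var}_*(l^* )]}{\mathrm{Var}(\mathbb{E}_*[s^*])}=1\iff\lim_{n\to\infty}n(1-\rho)=1.$$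
   Context: $\mathbb{E}_*[s^*]$ is the bootstrap-smoothed (bagged) version of $s$. Here $\mathrm{Var}$ and $\mathbb{E}$ without star refer to the randomness of the data $X_1,\dots,X_n$. *)

theory Defs
  imports "HOL-Probability.Probability"
begin

text \<open>Indices are 0-based: data X_1..X_n are x 0 .. x (n-1); resampling indices
I_1..I_n are I 0 .. I (n-1), each uniform on {0..<n}.\<close>

definition resamples :: "nat \<Rightarrow> (nat \<Rightarrow> nat) set" where
  "resamples n = PiE {0..<n} (\<lambda>_. {0..<n})"

definition bootE :: "nat \<Rightarrow> ((nat \<Rightarrow> nat) \<Rightarrow> real) \<Rightarrow> real" where
  "bootE n g = (\<Sum>I\<in>resamples n. g I) / real n ^ n"

definition bootVar :: "nat \<Rightarrow> ((nat \<Rightarrow> nat) \<Rightarrow> real) \<Rightarrow> real" where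
  "bootVar n g = bootE n (\<lambda>I. (g I - bootE n g)^2)"

definition wcount :: "nat \<Rightarrow> nat \<Rightarrow> (nat \<Rightarrow> nat) \<Rightarrow> real" where
  "wcount n j I = real (card {i\<in>{0..<n}. I i = j})"

definition sstar :: "nat \<Rightarrow> (nat \<Rightarrow> (nat \<Rightarrow> real) \<Rightarrow> real) \<Rightarrow> (nat \<Rightarrow> real) \<Rightarrow> (nat \<Rightarrow> nat) \<Rightarrow> real" where
  "sstar n s x I = s n (\<lambda>k\<in>{0..<n}. x (I k))"

definition econd :: "nat \<Rightarrow> (nat \<Rightarrow> (nat \<Rightarrow> real) \<Rightarrow> real) \<Rightarrow> nat \<Rightarrow> (nat \<Rightarrow> real) \<Rightarrow> real" where
  "econd n s i x = (\<Sum>I\<in>{I\<in>resamples n. I 0 = i}. sstar n s x I) / real n ^ (n - 1)"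

definition szero :: "nat \<Rightarrow> (nat \<Rightarrow> (nat \<Rightarrow> real) \<Rightarrow> real) \<Rightarrow> (nat \<Rightarrow> real) \<Rightarrow> real" where
  "szero n s x = bootE n (sstar n s x)"

definition wspan :: "nat \<Rightarrow> ((nat \<Rightarrow> nat) \<Rightarrow> real) set" where
  "wspan n = {restrict (\<lambda>I. \<Sum>j<n. c j * wcount n j I) (resamples n) | c. True}"

definition wproj :: "nat \<Rightarrow> ((nat \<Rightarrow> nat) \<Rightarrow> real) \<Rightarrow> ((nat \<Rightarrow> nat) \<Rightarrow> real)" where
  "wproj n f = (THE l. l \<in> wspan n \<and>
      (\<forall>j<n. bootE n (\<lambda>I. (f I - l I) * wcount n j I) = 0))"

definition lstar :: "nat \<Rightarrow> (nat \<Rightarrow> (nat \<Rightarrow> real) \<Rightarrow> real) \<Rightarrow> (nat \<Rightarrow> real) \<Rightarrow> (nat \<Rightarrow> nat) \<Rightarrow> real" where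
  "lstar n s x = wproj n (\<lambda>I. sstar n s x I - szero n s x)"

definition dataM :: "(nat \<Rightarrow> real measure) \<Rightarrow> nat \<Rightarrow> (nat \<Rightarrow> real) measure" where
  "dataM D n = PiM {0..<n} (\<lambda>_. D n)"

definition dE :: "'a measure \<Rightarrow> ('a \<Rightarrow> real) \<Rightarrow> real" where
  "dE M X = (\<integral>x. X x \<partial>M)"

definition dVar :: "'a measure \<Rightarrow> ('a \<Rightarrow> real) \<Rightarrow> real" where
  "dVar M X = dE M (\<lambda>x. (X x - dE M X)^2)"

definition dCov :: "'a measure \<Rightarrow> ('a \<Rightarrow> real) \<Rightarrow> ('a \<Rightarrow> real) \<Rightarrow> real" where
  "dCov M X Y = dE M (\<lambda>x. (X x - dE M X) * (Y x - dE M Y))"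

definition dCorr :: "'a measure \<Rightarrow> ('a \<Rightarrow> real) \<Rightarrow> ('a \<Rightarrow> real) \<Rightarrow> real" where
  "dCorr M X Y = dCov M X Y / sqrt (dVar M X * dVar M Y)"

end

theory Submission
  imports Defs "HOL-Real_Asymp.Real_Asymp"
begin


lemma finite_resamples[simp]: "finite (resamples n)"
  by (simp add: resamples_def finite_PiE)

lemma card_resamples: "card (resamples n) = n ^ n"
  by (simp add: resamples_def card_PiE)

lemma prod_if_one:
  fixes u v :: real
  assumes "a < n"
  shows "(\<Prod>x\<in>{0..<n}. if x = a then u else v) = u * v ^ (n - 1)"
proof -
  have "(\<Prod>x\<in>{0..<n}. if x = a then u else v) = (if a = a then u else v) * (\<Prod>x\<in>{0..<n}-{a}. if x = a then u else v)"
    using assms by (subst prod.remove[of _ a]) auto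
  also have "(\<Prod>x\<in>{0..<n}-{a}. if x = a then u else v) = (\<Prod>x\<in>{0..<n}-{a}. v)"
    by (rule prod.cong) auto
  also have "\<dots> = v ^ (n - 1)" using assms by simp
  finally show ?thesis by simp
qed

lemma sum_one_coord:
  fixes g :: "nat \<Rightarrow> real"
  assumes "a < n"
  shows "(\<Sum>I\<in>resamples n. g (I a)) = (\<Sum>j<n. g j) * real n ^ (n - 1)"
proof -
  have "(\<Sum>I\<in>resamples n. g (I a)) = (\<Sum>I\<in>resamples n. \<Prod>x\<in>{0..<n}. (if x = a then g (I x) else 1))"
    using assms by (intro sum.cong) (auto simp: prod.delta)
  also have "\<dots> = (\<Prod>x\<in>{0..<n}. \<Sum>y\<in>{0..<n}. (if x = a then g y else 1))"
    unfolding resamples_def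
    by (subst prod_sum_PiE) (auto intro!: sum.cong prod.cong)
  also have "\<dots> = (\<Prod>x\<in>{0..<n}. if x = a then (\<Sum>y\<in>{0..<n}. g y) else real n)"
    by (intro prod.cong) auto
  also have "\<dots> = (\<Sum>y\<in>{0..<n}. g y) * real n ^ (n - 1)"
    by (rule prod_if_one[OF assms])
  finally show ?thesis by (simp add: atLeast0LessThan)
qed

lemma sum_two_coord:
  fixes g h :: "nat \<Rightarrow> real"
  assumes "a < n" "b < n" "a \<noteq> b"
  shows "(\<Sum>I\<in>resamples n. g (I a) * h (I b)) = (\<Sum>j<n. g j) * (\<Sum>j<n. h j) * real n ^ (n - 2)"
proof -
  have "(\<Sum>I\<in>resamples n. g (I a) * h (I b)) = (\<Sum>I\<in>resamples n. \<Prod>x\<in>{0..<n}. (if x = a then g (I x) else if x = b then h (I x) else 1))"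
  proof (intro sum.cong refl)
    fix I
    have "(\<Prod>x\<in>{0..<n}. (if x = a then g (I x) else if x = b then h (I x) else 1))
       = (if a = a then g (I a) else if a = b then h (I a) else 1) * (\<Prod>x\<in>{0..<n}-{a}. (if x = a then g (I x) else if x = b then h (I x) else 1))"
      using assms by (subst prod.remove[of _ a]) auto
    also have "(\<Prod>x\<in>{0..<n}-{a}. (if x = a then g (I x) else if x = b then h (I x) else 1)) = (\<Prod>x\<in>{0..<n}-{a}. (if x = b then h (I x) else 1))"
      by (rule prod.cong) auto
    also have "\<dots> = h (I b)" using assms by (simp add: prod.delta)
    finally show "g (I a) * h (I b) = (\<Prod>x\<in>{0..<n}. (if x = a then g (I x) else if x = b then h (I x) else 1))" by simp
  qed
  also have "\<dots> = (\<Prod>x\<in>{0..<n}. \<Sum>y\<in>{0..<n}. (if x = a then g y else if x = b then h y else 1))"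
    unfolding resamples_def
    by (subst prod_sum_PiE) (auto intro!: sum.cong prod.cong)
  also have "\<dots> = (\<Prod>x\<in>{0..<n}. if x = a then (\<Sum>y\<in>{0..<n}. g y) else if x = b then (\<Sum>y\<in>{0..<n}. h y) else real n)"
    by (intro prod.cong) auto
  also have "\<dots> = (\<Sum>y\<in>{0..<n}. g y) * (\<Prod>x\<in>{0..<n}-{a}. if x = a then (\<Sum>y\<in>{0..<n}. g y) else if x = b then (\<Sum>y\<in>{0..<n}. h y) else real n)"
    using assms by (subst prod.remove[of _ a]) auto
  also have "(\<Prod>x\<in>{0..<n}-{a}. if x = a then (\<Sum>y\<in>{0..<n}. g y) else if x = b then (\<Sum>y\<in>{0..<n}. h y) else real n)
      = (\<Prod>x\<in>{0..<n}-{a}. if x = b then (\<Sum>y\<in>{0..<n}. h y) else real n)"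
    by (rule prod.cong) auto
  also have "\<dots> = (\<Sum>y\<in>{0..<n}. h y) * (\<Prod>x\<in>{0..<n}-{a}-{b}. if x = b then (\<Sum>y\<in>{0..<n}. h y) else real n)"
    using assms by (subst prod.remove[of _ b]) auto
  also have "(\<Prod>x\<in>{0..<n}-{a}-{b}. if x = b then (\<Sum>y\<in>{0..<n}. h y) else real n) = (\<Prod>x\<in>{0..<n}-{a}-{b}. real n)"
    by (rule prod.cong) auto
  also have "\<dots> = real n ^ (n - 2)"
    using assms by (simp add: card_Diff_subset)
  finally show ?thesis by (simp add: atLeast0LessThan)
qed



lemma sum_coord_pair:
  fixes g h :: "nat \<Rightarrow> real"
  assumes "a < n" "b < n"
  shows "(\<Sum>I\<in>resamples n. g (I a) * h (I b)) =
    (if a = b then (\<Sum>j<n. g j * h j) * real n ^ (n - 1) else (\<Sum>j<n. g j) * (\<Sum>j<n. h j) * real n ^ (n - 2))"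
  using assms sum_two_coord[OF assms] sum_one_coord[of a n "\<lambda>j. g j * h j"] by auto

lemma resamples_mem: "I \<in> resamples n \<Longrightarrow> i < n \<Longrightarrow> I i < n"
  by (auto simp: resamples_def PiE_iff finite_PiE)

lemma wcount_sum: "wcount n j I = (\<Sum>i<n. if I i = j then 1 else 0)"
proof -
  have "wcount n j I = (\<Sum>i\<in>{i\<in>{0..<n}. I i = j}. 1)"
    by (simp add: wcount_def)
  also have "\<dots> = (\<Sum>i\<in>{0..<n}. if I i = j then 1 else 0)"
    by (rule sum.inter_filter) simp
  finally show ?thesis by (simp add: atLeast0LessThan)
qed

lemma L_eq:
  assumes "I \<in> resamples n"
  shows "(\<Sum>k<n. c k * wcount n k I) = (\<Sum>i<n. c (I i))"
proof -
  have "(\<Sum>k<n. c k * wcount n k I) = (\<Sum>k<n. \<Sum>i<n. c k * (if I i = k then 1 else 0))"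
    by (simp add: wcount_sum sum_distrib_left)
  also have "\<dots> = (\<Sum>i<n. \<Sum>k<n. c k * (if I i = k then 1 else 0))"
    by (rule sum.swap)
  also have "\<dots> = (\<Sum>i<n. c (I i))"
    using resamples_mem[OF assms] by (intro sum.cong refl) (auto simp: if_distrib cong: if_cong)
  finally show ?thesis .
qed

lemma sstar_perm:
  assumes sym: "\<And>x p. p permutes {0..<n} \<Longrightarrow> s n (\<lambda>k\<in>{0..<n}. x (p k)) = s n (\<lambda>k\<in>{0..<n}. x k)"
    and "p permutes {0..<n}"
  shows "sstar n s x (I \<circ> p) = sstar n s x I"
  using sym[OF assms(2), of "\<lambda>k. x (I k)"] by (simp add: sstar_def)

lemma sum_sym_coord:
  assumes sym: "\<And>x p. p permutes {0..<n} \<Longrightarrow> s n (\<lambda>k\<in>{0..<n}. x (p k)) = s n (\<lambda>k\<in>{0..<n}. x k)"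
    and a: "a < n"
  shows "(\<Sum>I\<in>resamples n. sstar n s x I * (if I a = j then 1 else 0)) =
         (\<Sum>I\<in>resamples n. sstar n s x I * (if I 0 = j then 1 else 0))"
proof -
  define t where "t = Transposition.transpose 0 a"
  have tp: "t permutes {0..<n}" using a unfolding t_def by (intro permutes_swap_id) auto
  have tt: "t (t k) = k" for k unfolding t_def by simp
  have mem: "I \<circ> t \<in> resamples n" if "I \<in> resamples n" for I
  proof -
    have "t k \<notin> {0..<n}" if "k \<notin> {0..<n}" for k
      using that a by (auto simp: t_def transpose_def)
    moreover have "t k < n" if "k < n" for k using permutes_in_image[OF tp] that by auto
    ultimately show ?thesis using that unfolding resamples_def
      by (auto simp: PiE_iff extensional_def)
  qed
  show ?thesis
  proof (rule sum.reindex_bij_witness[of _ "\<lambda>I. I \<circ> t" "\<lambda>I. I \<circ> t"])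
    show "I \<circ> t \<circ> t = I" for I :: "nat \<Rightarrow> nat" by (auto simp: tt)
    show "I \<circ> t \<in> resamples n" if "I \<in> resamples n" for I using mem that .
    show "I \<circ> t \<in> resamples n" if "I \<in> resamples n" for I using mem that .
    show "I \<circ> t \<circ> t = I" for I :: "nat \<Rightarrow> nat" by (auto simp: tt)
    show "sstar n s x (I \<circ> t) * (if (I \<circ> t) 0 = j then 1 else 0) = sstar n s x I * (if I a = j then 1 else 0)" for I
      using sstar_perm[of n s, OF sym tp] by (simp add: t_def)
  qed
qed

lemma szero_eq:
  assumes "n \<ge> 1"
  shows "szero n s x = (\<Sum>j<n. econd n s j x) / real n"
proof -
  have "(\<Sum>I\<in>resamples n. sstar n s x I) = (\<Sum>j<n. \<Sum>I\<in>{I\<in>resamples n. I 0 = j}. sstar n s x I)"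
    using assms by (intro sum.group[symmetric]) (auto simp: resamples_def PiE_iff finite_PiE)
  also have "\<dots> = (\<Sum>j<n. econd n s j x * real n ^ (n - 1))"
    by (simp add: econd_def)
  finally have "(\<Sum>I\<in>resamples n. sstar n s x I) = (\<Sum>j<n. econd n s j x) * real n ^ (n - 1)"
    by (simp add: sum_distrib_right)
  moreover have "real n ^ n = real n * real n ^ (n - 1)"
    using assms by (metis Suc_diff_1 less_le_trans power_Suc zero_less_one)
  ultimately show ?thesis using assms
    by (simp add: szero_def bootE_def)
qed



lemma pow_nn: "n \<ge> 1 \<Longrightarrow> real n ^ n = real n * real n ^ (n - 1)"
  by (metis Suc_diff_1 less_le_trans power_Suc zero_less_one)

lemma sum_restrict_res: "(\<Sum>I\<in>resamples n. g (restrict f (resamples n) I) I) = (\<Sum>I\<in>resamples n. g (f I) I)"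
  by (intro sum.cong) auto

lemma wproj_eq:
  assumes n1: "n \<ge> 1"
    and orth: "\<And>j. j < n \<Longrightarrow> (\<Sum>I\<in>resamples n. (f I - (\<Sum>k<n. c k * wcount n k I)) * wcount n j I) = 0"
  shows "wproj n f = restrict (\<lambda>I. \<Sum>k<n. c k * wcount n k I) (resamples n)"
  unfolding wproj_def
proof (rule the_equality)
  have nz: "real n ^ n \<noteq> 0" using n1 by simp
  show "restrict (\<lambda>I. \<Sum>k<n. c k * wcount n k I) (resamples n) \<in> wspan n \<and>
    (\<forall>j<n. bootE n (\<lambda>I. (f I - restrict (\<lambda>I. \<Sum>k<n. c k * wcount n k I) (resamples n) I) * wcount n j I) = 0)"
    using orth unfolding wspan_def bootE_def by (auto simp: sum_restrict_res)
  fix l assume l: "l \<in> wspan n \<and> (\<forall>j<n. bootE n (\<lambda>I. (f I - l I) * wcount n j I) = 0)"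
  then obtain d where ld: "l = restrict (\<lambda>I. \<Sum>k<n. d k * wcount n k I) (resamples n)"
    unfolding wspan_def by auto
  define Dl where "Dl I = (\<Sum>k<n. (c k - d k) * wcount n k I)" for I
  have o2: "(\<Sum>I\<in>resamples n. (f I - (\<Sum>k<n. d k * wcount n k I)) * wcount n j I) = 0" if "j < n" for j
  proof -
    have "bootE n (\<lambda>I. (f I - l I) * wcount n j I) = 0" using l that by auto
    then show ?thesis using nz unfolding bootE_def ld by (auto simp: sum_restrict_res)
  qed
  have o3: "(\<Sum>I\<in>resamples n. Dl I * wcount n j I) = 0" if "j < n" for j
  proof -
    have "(\<Sum>I\<in>resamples n. Dl I * wcount n j I) =
      (\<Sum>I\<in>resamples n. (f I - (\<Sum>k<n. d k * wcount n k I)) * wcount n j I) -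
      (\<Sum>I\<in>resamples n. (f I - (\<Sum>k<n. c k * wcount n k I)) * wcount n j I)"
      unfolding sum_subtractf[symmetric] Dl_def
      by (intro sum.cong) (auto simp: algebra_simps sum_subtractf)
    then show ?thesis using o2[OF that] orth[OF that] by simp
  qed
  have "(\<Sum>I\<in>resamples n. (Dl I)^2) = (\<Sum>I\<in>resamples n. \<Sum>k<n. (c k - d k) * (Dl I * wcount n k I))"
    unfolding power2_eq_square
    by (intro sum.cong refl) (simp add: Dl_def sum_distrib_left algebra_simps)
  also have "\<dots> = (\<Sum>k<n. (c k - d k) * (\<Sum>I\<in>resamples n. Dl I * wcount n k I))"
    by (subst sum.swap) (simp add: sum_distrib_left)
  also have "\<dots> = 0" using o3 by simp
  finally have "(\<Sum>I\<in>resamples n. (Dl I)^2) = 0" .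
  then have D0: "Dl I = 0" if "I \<in> resamples n" for I
    using that by (subst (asm) sum_nonneg_eq_0_iff) auto
  show "l = restrict (\<lambda>I. \<Sum>k<n. c k * wcount n k I) (resamples n)"
  proof
    fix I show "l I = restrict (\<lambda>I. \<Sum>k<n. c k * wcount n k I) (resamples n) I"
    proof (cases "I \<in> resamples n")
      case True
      then have "(\<Sum>k<n. c k * wcount n k I) - (\<Sum>k<n. d k * wcount n k I) = 0"
        using D0[OF True] unfolding Dl_def by (simp add: sum_subtractf[symmetric] algebra_simps)
      then show ?thesis using True ld by simp
    qed (simp add: ld)
  qed
qed

lemma sum_ind:
  fixes j n :: nat
  assumes "j < n"
  shows "(\<Sum>k<n. g k * (if k = j then 1 else 0)) = (g j :: real)"
proof -
  have "(\<Sum>k<n. g k * (if k = j then 1 else 0)) = (\<Sum>k<n. if k = j then g k else 0)"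
    by (intro sum.cong) auto
  also have "\<dots> = g j" using assms by simp
  finally show ?thesis .
qed

lemma bootVar_lstar:
  assumes sym: "\<And>x p. p permutes {0..<n} \<Longrightarrow> s n (\<lambda>k\<in>{0..<n}. x (p k)) = s n (\<lambda>k\<in>{0..<n}. x k)"
    and n1: "n \<ge> 1"
  shows "bootVar n (lstar n s x) = (\<Sum>j<n. (econd n s j x - szero n s x)^2)"
proof -
  define c where "c j = econd n s j x - szero n s x" for j
  define P where "P = real n ^ (n - 1)"
  have nn: "real n ^ n = real n * P" unfolding P_def using pow_nn[OF n1] .
  have nz: "real n \<noteq> 0" "P \<noteq> 0" using n1 by (auto simp: P_def)
  have sc: "(\<Sum>j<n. c j) = 0"
    using szero_eq[OF n1, of s x] nz by (simp add: c_def sum_subtractf)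
  define L where "L I = (\<Sum>k<n. c k * wcount n k I)" for I
  have LI: "L I = (\<Sum>a<n. c (I a))" if "I \<in> resamples n" for I
    unfolding L_def using L_eq[OF that] .
  have wI: "wcount n j I = (\<Sum>i<n. if I i = j then 1 else 0)" for j I by (rule wcount_sum)
  have orth: "(\<Sum>I\<in>resamples n. ((sstar n s x I - szero n s x) - L I) * wcount n j I) = 0" if j: "j < n" for j
  proof -
    have S1: "(\<Sum>I\<in>resamples n. sstar n s x I * wcount n j I) = real n * (econd n s j x * P)"
    proof -
      have "(\<Sum>I\<in>resamples n. sstar n s x I * wcount n j I)
          = (\<Sum>i<n. \<Sum>I\<in>resamples n. sstar n s x I * (if I i = j then 1 else 0))"
        unfolding wI sum_distrib_left by (rule sum.swap)
      also have "\<dots> = (\<Sum>i<n. \<Sum>I\<in>resamples n. sstar n s x I * (if I 0 = j then 1 else 0))"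
        by (intro sum.cong refl sum_sym_coord[of n s, OF sym]) auto
      also have "(\<Sum>I\<in>resamples n. sstar n s x I * (if I 0 = j then 1 else 0))
          = (\<Sum>I\<in>{I\<in>resamples n. I 0 = j}. sstar n s x I)"
        by (subst sum.inter_filter) (auto intro: sum.cong)
      also have "\<dots> = econd n s j x * P"
        using nz by (simp add: econd_def P_def)
      finally show ?thesis by simp
    qed
    have S2: "(\<Sum>I\<in>resamples n. wcount n j I) = real n * P"
    proof -
      have "(\<Sum>I\<in>resamples n. wcount n j I) = (\<Sum>i<n. \<Sum>I\<in>resamples n. (\<lambda>k. if k = j then 1 else 0) (I i))"
        unfolding wI by (rule sum.swap)
      also have "\<dots> = (\<Sum>i<n. P)"
      proof (intro sum.cong refl)
        fix i assume "i \<in> {..<n}"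
        then show "(\<Sum>I\<in>resamples n. (\<lambda>k. if k = j then 1 else 0) (I i)) = P"
          using sum_one_coord[of i n "\<lambda>k. if k = j then 1 else 0"] j sum.delta[of "{..<n}" j "\<lambda>_. 1::real"]
          by (simp add: P_def)
      qed
      finally show ?thesis by simp
    qed
    have S3: "(\<Sum>I\<in>resamples n. L I * wcount n j I) = real n * (c j * P)"
    proof -
      have "(\<Sum>I\<in>resamples n. L I * wcount n j I) =
          (\<Sum>I\<in>resamples n. \<Sum>a<n. \<Sum>i<n. c (I a) * (\<lambda>k. if k = j then 1 else 0) (I i))"
        by (intro sum.cong refl) (simp add: LI wI sum_product)
      also have "\<dots> = (\<Sum>a<n. \<Sum>i<n. \<Sum>I\<in>resamples n. c (I a) * (\<lambda>k. if k = j then 1 else 0) (I i))"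
        by (rule trans[OF sum.swap], intro sum.cong refl, rule sum.swap)
      also have "\<dots> = (\<Sum>a<n. \<Sum>i<n. if a = i then c j * P else 0)"
      proof (intro sum.cong refl)
        fix a i assume ai: "a \<in> {..<n}" "i \<in> {..<n}"
        show "(\<Sum>I\<in>resamples n. c (I a) * (\<lambda>k. if k = j then 1 else 0) (I i)) = (if a = i then c j * P else 0)"
          using sum_coord_pair[of a n i c "\<lambda>k. if k = j then 1 else 0"] sum_ind[OF j, of c] ai sc
          by (simp add: P_def)
      qed
      also have "\<dots> = (\<Sum>a<n. c j * P)"
        by (intro sum.cong refl) simp
      finally show ?thesis by simp
    qed
    have "(\<Sum>I\<in>resamples n. ((sstar n s x I - szero n s x) - L I) * wcount n j I)
      = (\<Sum>I\<in>resamples n. sstar n s x I * wcount n j I) - szero n s x * (\<Sum>I\<in>resamples n. wcount n j I)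
        - (\<Sum>I\<in>resamples n. L I * wcount n j I)"
      by (simp add: algebra_simps sum_subtractf sum_distrib_left sum.distrib)
    also have "\<dots> = real n * P * (econd n s j x - szero n s x - c j)"
      unfolding S1 S2 S3 by (simp add: algebra_simps)
    also have "\<dots> = 0" by (simp add: c_def)
    finally show ?thesis .
  qed
  have ls: "lstar n s x = restrict L (resamples n)"
    unfolding lstar_def L_def by (rule wproj_eq[OF n1]) (use orth in \<open>simp add: L_def\<close>)
  have sumL: "(\<Sum>I\<in>resamples n. L I) = 0"
  proof -
    have "(\<Sum>I\<in>resamples n. L I) = (\<Sum>I\<in>resamples n. \<Sum>a<n. c (I a))"
      by (intro sum.cong refl) (simp add: LI)
    also have "\<dots> = (\<Sum>a<n. \<Sum>I\<in>resamples n. c (I a))"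
      by (rule sum.swap)
    also have "\<dots> = 0" by (simp add: sum_one_coord sc)
    finally show ?thesis .
  qed
  have sumL2: "(\<Sum>I\<in>resamples n. (L I)^2) = real n * P * (\<Sum>k<n. (c k)^2)"
  proof -
    have "(\<Sum>I\<in>resamples n. (L I)^2) = (\<Sum>I\<in>resamples n. \<Sum>a<n. \<Sum>b<n. c (I a) * c (I b))"
      by (intro sum.cong refl) (simp add: LI power2_eq_square sum_product)
    also have "\<dots> = (\<Sum>a<n. \<Sum>b<n. \<Sum>I\<in>resamples n. c (I a) * c (I b))"
      by (rule trans[OF sum.swap], intro sum.cong refl, rule sum.swap)
    also have "\<dots> = (\<Sum>a<n. \<Sum>b<n. if a = b then (\<Sum>k<n. (c k)^2) * P else 0)"
      by (intro sum.cong refl) (auto simp: sum_coord_pair sc P_def power2_eq_square)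
    also have "\<dots> = (\<Sum>a<n. (\<Sum>k<n. (c k)^2) * P)"
      by (intro sum.cong refl) simp
    finally show ?thesis by simp
  qed
  have "bootE n (restrict L (resamples n)) = 0"
    unfolding bootE_def by (simp add: sum_restrict_res sumL)
  then have "bootVar n (restrict L (resamples n)) = (\<Sum>I\<in>resamples n. (L I)^2) / real n ^ n"
    unfolding bootVar_def bootE_def by (simp add: sum_restrict_res sumL)
  also have "\<dots> = (\<Sum>k<n. (c k)^2)" using nz by (simp add: sumL2 nn)
  finally show ?thesis unfolding ls c_def .
qed



lemma econd_perm:
  assumes p: "p permutes {0..<n}" and i: "i < n"
  shows "econd n s i (\<lambda>k\<in>{0..<n}. x (p k)) = econd n s (p i) x"
proof -
  define h where "h I = (\<lambda>k\<in>{0..<n}. p (I k))" for I :: "nat \<Rightarrow> nat"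
  define h' where "h' J = (\<lambda>k\<in>{0..<n}. inv p (J k))" for J :: "nat \<Rightarrow> nat"
  have pin: "p k < n" if "k < n" for k using permutes_in_image[OF p] that by auto
  have ipin: "inv p k < n" if "k < n" for k using permutes_in_image[OF permutes_inv[OF p]] that by auto
  have "(\<Sum>I\<in>{I\<in>resamples n. I 0 = i}. sstar n s (\<lambda>k\<in>{0..<n}. x (p k)) I) =
        (\<Sum>J\<in>{J\<in>resamples n. J 0 = p i}. sstar n s x J)"
  proof (rule sum.reindex_bij_witness[of _ h' h])
    fix I assume I: "I \<in> {I\<in>resamples n. I 0 = i}"
    show "h' (h I) = I"
      using I by (auto simp: h_def h'_def resamples_def PiE_iff permutes_inverses[OF p] extensional_def fun_eq_iff)
    show "h I \<in> {J\<in>resamples n. J 0 = p i}"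
      using I i by (auto simp: h_def resamples_def PiE_iff pin)
    show "sstar n s x (h I) = sstar n s (\<lambda>k\<in>{0..<n}. x (p k)) I"
      using I unfolding sstar_def h_def
      by (intro arg_cong[where f="s n"]) (auto simp: resamples_def PiE_iff fun_eq_iff)
  next
    fix J assume J: "J \<in> {J\<in>resamples n. J 0 = p i}"
    show "h (h' J) = J"
      using J by (auto simp: h_def h'_def resamples_def PiE_iff permutes_inverses[OF p] extensional_def fun_eq_iff)
    show "h' J \<in> {I\<in>resamples n. I 0 = i}"
      using J i by (auto simp: h'_def resamples_def PiE_iff ipin permutes_inverses[OF p])
  qed
  then show ?thesis by (simp add: econd_def)
qed

context
  fixes D :: "nat \<Rightarrow> real measure" and s :: "nat \<Rightarrow> (nat \<Rightarrow> real) \<Rightarrow> real" and n :: nat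
  assumes prob: "prob_space (D n)"
    and borel: "sets (D n) = sets borel"
    and meas: "s n \<in> borel_measurable (PiM {0..<n} (\<lambda>_. borel))"
begin

lemma ps: "prob_space (dataM D n)"
  unfolding dataM_def by (intro prob_space_PiM prob)

lemma comp_meas:
  assumes "j < n" shows "(\<lambda>x. x j) \<in> borel_measurable (dataM D n)"
proof -
  have "(\<lambda>x. x j) \<in> measurable (PiM {0..<n} (\<lambda>_. D n)) (D n)"
    using assms by (intro measurable_component_singleton) auto
  then show ?thesis unfolding dataM_def using measurable_cong_sets[OF refl borel] by metis
qed

lemma econd_meas: "econd n s i \<in> borel_measurable (dataM D n)"
proof -
  have "(\<lambda>x. sstar n s x I) \<in> borel_measurable (dataM D n)" if "I \<in> resamples n" for I
  proof -
    have "(\<lambda>x. \<lambda>k\<in>{0..<n}. x (I k)) \<in> measurable (dataM D n) (PiM {0..<n} (\<lambda>_. borel))"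
      using that by (intro measurable_restrict comp_meas) (auto simp: resamples_def PiE_iff)
    then show ?thesis unfolding sstar_def using meas by (rule measurable_compose)
  qed
  then show ?thesis unfolding econd_def[abs_def]
    by (intro borel_measurable_divide borel_measurable_sum) auto
qed

lemma T_meas:
  assumes p: "p permutes {0..<n}"
  shows "(\<lambda>x. \<lambda>k\<in>{0..<n}. x (p k)) \<in> measurable (dataM D n) (dataM D n)"
proof -
  have "p k < n" if "k < n" for k using permutes_in_image[OF p] that by auto
  then show ?thesis unfolding dataM_def
    by (intro measurable_restrict measurable_component_singleton) auto
qed

lemma T_distr:
  assumes p: "p permutes {0..<n}"
  shows "distr (dataM D n) (dataM D n) (\<lambda>x. \<lambda>k\<in>{0..<n}. x (p k)) = dataM D n"
proof -
  have "inj_on p {0..<n}" using p by (meson permutes_inj_on)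
  moreover have "p \<in> {0..<n} \<rightarrow> {0..<n}" using permutes_in_image[OF p] by auto
  ultimately show ?thesis unfolding dataM_def
    using distr_PiM_reindex[of "{0..<n}" "\<lambda>_. D n" p "{0..<n}"] prob by simp
qed

lemma T_integral:
  fixes g :: "(nat \<Rightarrow> real) \<Rightarrow> real"
  assumes p: "p permutes {0..<n}" and g: "g \<in> borel_measurable (dataM D n)"
  shows "(\<integral>x. g (\<lambda>k\<in>{0..<n}. x (p k)) \<partial>dataM D n) = (\<integral>x. g x \<partial>dataM D n)"
  using integral_distr[OF T_meas[OF p] g] T_distr[OF p] by simp

lemma T_integrable:
  fixes g :: "(nat \<Rightarrow> real) \<Rightarrow> real"
  assumes p: "p permutes {0..<n}" and g: "g \<in> borel_measurable (dataM D n)"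
  shows "integrable (dataM D n) (\<lambda>x. g (\<lambda>k\<in>{0..<n}. x (p k))) \<longleftrightarrow> integrable (dataM D n) g"
  using integrable_distr_eq[OF T_meas[OF p] g] T_distr[OF p] by simp

end



lemma abs_prod_le: "\<bar>a * b\<bar> \<le> a^2 + (b::real)^2"
proof -
  have "0 \<le> (\<bar>a\<bar> - \<bar>b\<bar>)^2" by simp
  then have "2 * \<bar>a\<bar> * \<bar>b\<bar> \<le> a^2 + b^2" by (simp add: power2_eq_square algebra_simps)
  moreover have "0 \<le> \<bar>a\<bar> * \<bar>b\<bar>" by simp
  ultimately have "\<bar>a\<bar> * \<bar>b\<bar> \<le> a^2 + b^2" by linarith
  then show ?thesis by (simp add: abs_mult)
qed

lemma perm1: assumes "i < (n::nat)" "0 < n" shows "\<exists>p. p permutes {0..<n} \<and> p 0 = i"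
  using assms by (intro exI[of _ "Transposition.transpose 0 i"]) (auto intro: permutes_swap_id)

lemma perm2:
  assumes "i < (n::nat)" "j < n" "i \<noteq> j"
  shows "\<exists>p. p permutes {0..<n} \<and> p 0 = i \<and> p 1 = j"
proof -
  define q where "q = Transposition.transpose 0 i"
  have n2: "1 < n" using assms by auto
  have q: "q permutes {0..<n}" unfolding q_def using assms by (intro permutes_swap_id) auto
  have q1: "q 1 < n" using permutes_in_image[OF q] n2 by auto
  have q1i: "q 1 \<noteq> i" unfolding q_def by (auto simp: Transposition.transpose_def)
  define r where "r = Transposition.transpose (q 1) j"
  have r: "r permutes {0..<n}" unfolding r_def using assms q1 by (intro permutes_swap_id) auto
  have "(r \<circ> q) permutes {0..<n}" using q r by (rule permutes_compose)
  moreover have "(r \<circ> q) 0 = i" using q1i assms by (simp add: q_def r_def Transposition.transpose_def)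
  moreover have "(r \<circ> q) 1 = j" by (simp add: r_def)
  ultimately show ?thesis by blast
qed

context
  fixes D :: "nat \<Rightarrow> real measure" and s :: "nat \<Rightarrow> (nat \<Rightarrow> real) \<Rightarrow> real" and n :: nat
  assumes prob: "prob_space (D n)"
    and borel: "sets (D n) = sets borel"
    and meas: "s n \<in> borel_measurable (PiM {0..<n} (\<lambda>_. borel))"
    and n2: "n \<ge> 2"
    and L2: "integrable (dataM D n) (\<lambda>x. (econd n s 0 x)^2)"
begin

lemma e_fun:
  fixes h :: "real \<Rightarrow> real"
  assumes i: "i < n" and h: "h \<in> borel_measurable borel"
  shows "(\<integral>x. h (econd n s i x) \<partial>dataM D n) = (\<integral>x. h (econd n s 0 x) \<partial>dataM D n)"
    and "integrable (dataM D n) (\<lambda>x. h (econd n s i x)) \<longleftrightarrow> integrable (dataM D n) (\<lambda>x. h (econd n s 0 x))"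
proof -
  obtain p where p: "p permutes {0..<n}" "p 0 = i" using perm1[OF i] i by auto
  have g: "(\<lambda>x. h (econd n s 0 x)) \<in> borel_measurable (dataM D n)"
    using measurable_compose[OF econd_meas[where D=D and n=n and s=s, OF prob borel meas] h] by simp
  have eq: "econd n s 0 (\<lambda>k\<in>{0..<n}. x (p k)) = econd n s i x" for x
    using econd_perm[OF p(1), of 0] p n2 by simp
  show "(\<integral>x. h (econd n s i x) \<partial>dataM D n) = (\<integral>x. h (econd n s 0 x) \<partial>dataM D n)"
    using T_integral[where D=D and n=n and s=s, OF prob borel meas p(1) g] by (simp add: eq)
  show "integrable (dataM D n) (\<lambda>x. h (econd n s i x)) \<longleftrightarrow> integrable (dataM D n) (\<lambda>x. h (econd n s 0 x))"
    using T_integrable[where D=D and n=n and s=s, OF prob borel meas p(1) g] by (simp add: eq)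
qed

lemma e_sq_int: "i < n \<Longrightarrow> integrable (dataM D n) (\<lambda>x. (econd n s i x)^2)"
  using e_fun(2)[of i "\<lambda>t. t^2"] L2 by simp

lemma e_int: "i < n \<Longrightarrow> integrable (dataM D n) (econd n s i)"
proof -
  assume i: "i < n"
  interpret prob_space "dataM D n" by (rule ps[where D=D and n=n and s=s, OF prob borel meas])
  show ?thesis using square_integrable_imp_integrable[OF econd_meas[where D=D and n=n and s=s, OF prob borel meas] e_sq_int[OF i]] .
qed

lemma e_prod_int:
  assumes i: "i < n" and j: "j < n"
  shows "integrable (dataM D n) (\<lambda>x. econd n s i x * econd n s j x)"
proof (rule Bochner_Integration.integrable_bound[where f="\<lambda>x. (econd n s i x)^2 + (econd n s j x)^2"])
  show "integrable (dataM D n) (\<lambda>x. (econd n s i x)^2 + (econd n s j x)^2)"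
    using e_sq_int[OF i] e_sq_int[OF j] by (rule Bochner_Integration.integrable_add)
  show "(\<lambda>x. econd n s i x * econd n s j x) \<in> borel_measurable (dataM D n)"
    using econd_meas[where D=D and n=n and s=s, OF prob borel meas] by (intro borel_measurable_times)
  have "\<bar>econd n s i x * econd n s j x\<bar> \<le> \<bar>(econd n s i x)^2 + (econd n s j x)^2\<bar>" for x
    using abs_prod_le[of "econd n s i x" "econd n s j x"] by simp
  then show "AE x in dataM D n. norm (econd n s i x * econd n s j x) \<le> norm ((econd n s i x)^2 + (econd n s j x)^2)"
    by (intro AE_I2) simp
qed

lemma e_mean: "i < n \<Longrightarrow> (\<integral>x. econd n s i x \<partial>dataM D n) = (\<integral>x. econd n s 0 x \<partial>dataM D n)"
  using e_fun(1)[of i "\<lambda>t. t"] by simp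

lemma e_cross:
  assumes "i < n" "j < n"
  shows "(\<integral>x. econd n s i x * econd n s j x \<partial>dataM D n) =
    (if i = j then (\<integral>x. (econd n s 0 x)^2 \<partial>dataM D n) else (\<integral>x. econd n s 0 x * econd n s 1 x \<partial>dataM D n))"
proof (cases "i = j")
  case True
  then show ?thesis using e_fun(1)[of i "\<lambda>t. t^2"] assms by (simp add: power2_eq_square)
next
  case False
  obtain p where p: "p permutes {0..<n}" "p 0 = i" "p 1 = j" using perm2[OF assms False] by auto
  have g: "(\<lambda>x. econd n s 0 x * econd n s 1 x) \<in> borel_measurable (dataM D n)"
    using econd_meas[where D=D and n=n and s=s, OF prob borel meas] by simp
  have eq: "econd n s 0 (\<lambda>k\<in>{0..<n}. x (p k)) = econd n s i x"
     "econd n s (Suc 0) (\<lambda>k\<in>{0..<n}. x (p k)) = econd n s j x" for x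
    using econd_perm[OF p(1), of 0] econd_perm[OF p(1), of 1] p n2 by simp_all
  show ?thesis using T_integral[where D=D and n=n and s=s, OF prob borel meas p(1) g] False by (simp add: eq)
qed

end



lemma sumG: "(\<Sum>i<n. \<Sum>j<(n::nat). if i = j then a else b) = real n * a + real n * (real n - 1) * (b::real)"
proof -
  have "(\<Sum>j<n. if i = j then a else b) = a + (real n - 1) * b" if "i < n" for i
  proof -
    have "(\<Sum>j<n. if i = j then a else b) = (\<Sum>j<n. b + (if j = i then a - b else 0))"
      by (intro sum.cong) auto
    also have "\<dots> = real n * b + (a - b)" using that by (simp add: sum.distrib)
    finally show ?thesis by (simp add: algebra_simps)
  qed
  then have "(\<Sum>i<n. \<Sum>j<n. if i = j then a else b) = (\<Sum>i<n. a + (real n - 1) * b)"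
    by (intro sum.cong) auto
  then show ?thesis by (simp add: algebra_simps)
qed

lemma sq_expand:
  fixes e :: "nat \<Rightarrow> real"
  assumes "n \<ge> 1"
  shows "(\<Sum>j<n. (e j - (\<Sum>k<n. e k) / real n)^2) = (\<Sum>j<n. (e j)^2) - (\<Sum>i<n. \<Sum>j<n. e i * e j) / real n"
proof -
  define S where "S = (\<Sum>k<n. e k)"
  have nz: "real n \<noteq> 0" using assms by simp
  have "(\<Sum>j<n. (e j - S / real n)^2) = (\<Sum>j<n. (e j)^2 - 2 * (S / real n) * e j + (S / real n)^2)"
    by (intro sum.cong refl) (simp add: power2_diff algebra_simps)
  also have "\<dots> = (\<Sum>j<n. (e j)^2) - 2 * (S / real n) * S + real n * (S / real n)^2"
    by (simp add: sum.distrib sum_subtractf sum_distrib_left S_def)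
  also have "\<dots> = (\<Sum>j<n. (e j)^2) - S * S / real n"
    using nz by (simp add: field_simps power2_eq_square)
  also have "S * S = (\<Sum>i<n. \<Sum>j<n. e i * e j)" unfolding S_def by (rule sum_product)
  finally show ?thesis by (simp add: S_def)
qed

context
  fixes D :: "nat \<Rightarrow> real measure" and s :: "nat \<Rightarrow> (nat \<Rightarrow> real) \<Rightarrow> real" and n :: nat
  assumes prob: "prob_space (D n)"
    and borel: "sets (D n) = sets borel"
    and meas: "s n \<in> borel_measurable (PiM {0..<n} (\<lambda>_. borel))"
    and n2: "n \<ge> 2"
    and L2: "integrable (dataM D n) (\<lambda>x. (econd n s 0 x)^2)"
    and symA: "\<forall>x p. p permutes {0..<n} \<longrightarrow> s n (\<lambda>k\<in>{0..<n}. x (p k)) = s n (\<lambda>k\<in>{0..<n}. x k)"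
begin

abbreviation "M \<equiv> dataM D n"
abbreviation "mu \<equiv> (\<integral>x. econd n s 0 x \<partial>M)"
abbreviation "m2 \<equiv> (\<integral>x. (econd n s 0 x)^2 \<partial>M)"
abbreviation "m11 \<equiv> (\<integral>x. econd n s 0 x * econd n s 1 x \<partial>M)"

lemma if1: "i < n \<Longrightarrow> integrable M (econd n s i)"
  by (rule e_int[OF prob borel meas n2 L2])
lemma if2: "i < n \<Longrightarrow> integrable M (\<lambda>x. (econd n s i x)^2)"
  by (rule e_sq_int[OF prob borel meas n2 L2])
lemma if3: "i < n \<Longrightarrow> j < n \<Longrightarrow> integrable M (\<lambda>x. econd n s i x * econd n s j x)"
  by (rule e_prod_int[OF prob borel meas n2 L2])
lemma if4: "i < n \<Longrightarrow> (\<integral>x. econd n s i x \<partial>M) = mu"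
  by (rule e_mean[OF prob borel meas n2 L2])
lemma if5: "i < n \<Longrightarrow> j < n \<Longrightarrow> (\<integral>x. econd n s i x * econd n s j x \<partial>M) = (if i = j then m2 else m11)"
  by (rule e_cross[OF prob borel meas n2 L2])
lemma if6: "i < n \<Longrightarrow> (\<integral>x. (econd n s i x)^2 \<partial>M) = m2"
  using e_cross[OF prob borel meas n2 L2, of i i] by (simp add: power2_eq_square)

lemma V1: "dE M (\<lambda>x. bootVar n (lstar n s x)) = (real n - 1) * (m2 - m11)"
proof -
  have n1: "n \<ge> 1" using n2 by simp
  have pw: "bootVar n (lstar n s x) = (\<Sum>j<n. (econd n s j x)^2) - (\<Sum>i<n. \<Sum>j<n. econd n s i x * econd n s j x) / real n" for x
  proof -
    have 1: "bootVar n (lstar n s x) = (\<Sum>j<n. (econd n s j x - szero n s x)^2)"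
      by (rule bootVar_lstar[OF _ n1]) (use symA in blast)
    show ?thesis unfolding 1 szero_eq[OF n1] by (rule sq_expand[OF n1])
  qed
  have "dE M (\<lambda>x. bootVar n (lstar n s x)) =
      (\<Sum>j<n. \<integral>x. (econd n s j x)^2 \<partial>M) - (\<Sum>i<n. \<Sum>j<n. \<integral>x. econd n s i x * econd n s j x \<partial>M) / real n"
    unfolding dE_def pw
  proof (subst Bochner_Integration.integral_diff)
    show "integrable M (\<lambda>x. \<Sum>j<n. (econd n s j x)\<^sup>2)"
      by (intro Bochner_Integration.integrable_sum if2) simp
    show "integrable M (\<lambda>x. (\<Sum>i<n. \<Sum>j<n. econd n s i x * econd n s j x) / real n)"
      by (intro integrable_divide_zero Bochner_Integration.integrable_sum if3) simp_all
    show "(\<integral>x. (\<Sum>j<n. (econd n s j x)\<^sup>2) \<partial>M) - (\<integral>x. (\<Sum>i<n. \<Sum>j<n. econd n s i x * econd n s j x) / real n \<partial>M) =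
      (\<Sum>j<n. \<integral>x. (econd n s j x)^2 \<partial>M) - (\<Sum>i<n. \<Sum>j<n. \<integral>x. econd n s i x * econd n s j x \<partial>M) / real n"
    proof -
      have a: "(\<integral>x. (\<Sum>j<n. (econd n s j x)\<^sup>2) \<partial>M) = (\<Sum>j<n. \<integral>x. (econd n s j x)^2 \<partial>M)"
        by (rule Bochner_Integration.integral_sum) (rule if2, simp)
      have c: "(\<integral>x. (\<Sum>j<n. econd n s i x * econd n s j x) \<partial>M) = (\<Sum>j<n. \<integral>x. econd n s i x * econd n s j x \<partial>M)"
        if "i < n" for i
        by (rule Bochner_Integration.integral_sum) (rule if3, use that in simp_all)
      have b: "(\<integral>x. (\<Sum>i<n. \<Sum>j<n. econd n s i x * econd n s j x) \<partial>M) = (\<Sum>i<n. \<integral>x. (\<Sum>j<n. econd n s i x * econd n s j x) \<partial>M)"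
        by (rule Bochner_Integration.integral_sum) (intro Bochner_Integration.integrable_sum if3, simp_all)
      also have "\<dots> = (\<Sum>i<n. \<Sum>j<n. \<integral>x. econd n s i x * econd n s j x \<partial>M)"
        by (intro sum.cong refl c) simp
      finally show ?thesis unfolding integral_divide_zero a by simp
    qed
  qed
  also have "\<dots> = real n * m2 - (real n * m2 + real n * (real n - 1) * m11) / real n"
  proof -
    have "(\<Sum>i<n. \<Sum>j<n. \<integral>x. econd n s i x * econd n s j x \<partial>M) = (\<Sum>i<n. \<Sum>j<n. if i = j then m2 else m11)"
      by (intro sum.cong refl) (rule if5; simp)
    moreover have "(\<Sum>j<n. \<integral>x. (econd n s j x)^2 \<partial>M) = (\<Sum>j<n. m2)"
      by (intro sum.cong refl) (rule if6; simp)
    ultimately show ?thesis by (simp add: sumG)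
  qed
  also have "\<dots> = (real n - 1) * (m2 - m11)"
    using n1 by (simp add: field_simps)
  finally show ?thesis .
qed

lemma szero_fun: "szero n s = (\<lambda>x. (\<Sum>j<n. econd n s j x) / real n)"
  using szero_eq[of n s] n2 by auto

lemma V2: "dVar M (szero n s) = (m2 + (real n - 1) * m11) / real n - mu^2"
proof -
  interpret prob_space M by (rule ps[where D=D and n=n and s=s, OF prob borel meas])
  have n1: "real n \<noteq> 0" using n2 by simp
  have sq: "(szero n s x)^2 = (\<Sum>i<n. \<Sum>j<n. econd n s i x * econd n s j x) / (real n)^2" for x
    unfolding szero_fun by (simp add: power_divide power2_eq_square sum_product)
  have i1: "integrable M (szero n s)"
    unfolding szero_fun by (intro integrable_divide_zero Bochner_Integration.integrable_sum if1) simp_all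
  have i2: "integrable M (\<lambda>x. (szero n s x)^2)"
    unfolding sq by (intro integrable_divide_zero Bochner_Integration.integrable_sum if3) simp_all
  have E1: "(\<integral>x. szero n s x \<partial>M) = mu"
  proof -
    have "(\<integral>x. szero n s x \<partial>M) = (\<Sum>j<n. \<integral>x. econd n s j x \<partial>M) / real n"
      unfolding szero_fun integral_divide_zero
      by (subst Bochner_Integration.integral_sum) (auto intro: if1)
    also have "\<dots> = (\<Sum>j<n. mu) / real n"
      by (intro arg_cong[where f="\<lambda>t. t / real n"] sum.cong refl) (rule if4; simp)
    finally show ?thesis using n1 by simp
  qed
  have E2: "(\<integral>x. (szero n s x)^2 \<partial>M) = (m2 + (real n - 1) * m11) / real n"
  proof -
    have c: "(\<integral>x. (\<Sum>j<n. econd n s i x * econd n s j x) \<partial>M) = (\<Sum>j<n. \<integral>x. econd n s i x * econd n s j x \<partial>M)"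
      if "i < n" for i
      by (rule Bochner_Integration.integral_sum) (rule if3, use that in simp_all)
    have "(\<integral>x. (\<Sum>i<n. \<Sum>j<n. econd n s i x * econd n s j x) \<partial>M) = (\<Sum>i<n. \<integral>x. (\<Sum>j<n. econd n s i x * econd n s j x) \<partial>M)"
      by (rule Bochner_Integration.integral_sum) (intro Bochner_Integration.integrable_sum if3, simp_all)
    also have "\<dots> = (\<Sum>i<n. \<Sum>j<n. \<integral>x. econd n s i x * econd n s j x \<partial>M)"
      by (intro sum.cong refl c) simp
    also have "\<dots> = (\<Sum>i<n. \<Sum>j<n. if i = j then m2 else m11)"
      by (intro sum.cong refl) (rule if5; simp)
    also have "\<dots> = real n * m2 + real n * (real n - 1) * m11" by (rule sumG)
    finally have "(\<integral>x. (\<Sum>i<n. \<Sum>j<n. econd n s i x * econd n s j x) \<partial>M) = real n * m2 + real n * (real n - 1) * m11" .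
    then show ?thesis unfolding sq integral_divide_zero using n1
      by (simp add: field_simps power2_eq_square)
  qed
  have "dVar M (szero n s) = variance (szero n s)" unfolding dVar_def dE_def by simp
  also have "\<dots> = (\<integral>x. (szero n s x)^2 \<partial>M) - (\<integral>x. szero n s x \<partial>M)^2"
    by (rule variance_eq[OF i1 i2])
  finally show ?thesis unfolding E1 E2 .
qed

lemma V3a: "dVar M (econd n s 0) = m2 - mu^2"
proof -
  interpret prob_space M by (rule ps[where D=D and n=n and s=s, OF prob borel meas])
  have "dVar M (econd n s 0) = variance (econd n s 0)" unfolding dVar_def dE_def by simp
  also have "\<dots> = m2 - mu^2"
    by (rule variance_eq) (use if1 if2 n2 in auto)
  finally show ?thesis .
qed

lemma V3b: "dVar M (econd n s 1) = m2 - mu^2"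
proof -
  interpret prob_space M by (rule ps[where D=D and n=n and s=s, OF prob borel meas])
  have one: "1 < n" using n2 by simp
  have "dVar M (econd n s 1) = variance (econd n s 1)" unfolding dVar_def dE_def by simp
  also have "\<dots> = (\<integral>x. (econd n s 1 x)^2 \<partial>M) - (\<integral>x. econd n s 1 x \<partial>M)^2"
    by (rule variance_eq) (use if1[OF one] if2[OF one] in auto)
  also have "(\<integral>x. (econd n s 1 x)^2 \<partial>M) = m2" by (rule if6[OF one])
  also have "(\<integral>x. econd n s 1 x \<partial>M) = mu" by (rule if4[OF one])
  finally show ?thesis .
qed

lemma V3c: "dCov M (econd n s 0) (econd n s 1) = m11 - mu^2"
proof -
  interpret prob_space M by (rule ps[where D=D and n=n and s=s, OF prob borel meas])
  have one: "1 < n" and zero: "0 < n" using n2 by simp_all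
  have m1: "(\<integral>x. econd n s 1 x \<partial>M) = mu" by (rule if4[OF one])
  have "dCov M (econd n s 0) (econd n s 1) = (\<integral>x. (econd n s 0 x - mu) * (econd n s 1 x - mu) \<partial>M)"
    unfolding dCov_def dE_def m1 ..
  also have "\<dots> = (\<integral>x. (econd n s 0 x * econd n s 1 x - mu * econd n s 1 x) - (mu * econd n s 0 x - mu^2) \<partial>M)"
    by (simp add: algebra_simps power2_eq_square)
  also have "\<dots> = (\<integral>x. econd n s 0 x * econd n s 1 x - mu * econd n s 1 x \<partial>M) - (\<integral>x. mu * econd n s 0 x - mu^2 \<partial>M)"
    by (rule Bochner_Integration.integral_diff) (use if1[OF one] if1[OF zero] if3[OF zero one] in auto)
  also have "(\<integral>x. econd n s 0 x * econd n s 1 x - mu * econd n s 1 x \<partial>M) = m11 - mu * mu"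
    by (subst Bochner_Integration.integral_diff) (use if1[OF one] if3[OF zero one] m1 in auto)
  also have "(\<integral>x. mu * econd n s 0 x - mu^2 \<partial>M) = mu * mu - mu^2"
    by (subst Bochner_Integration.integral_diff) (use if1[OF zero] prob_space in auto)
  finally show ?thesis by (simp add: power2_eq_square)
qed

end



lemma lim_qt:
  "(\<lambda>n. (real n - 1) / real n) \<longlonglongrightarrow> 1"
  "(\<lambda>n. (real n - 1) / (real n)^2) \<longlonglongrightarrow> 0"
  by real_asymp+

lemma abstract_lim:
  fixes r a :: "nat \<Rightarrow> real"
  assumes h: "\<And>n. n \<ge> 2 \<Longrightarrow> 1 - (real n - 1) / (real n)^2 * a n > 0 \<and>
       r n = (real n - 1) / real n * a n / (1 - (real n - 1) / (real n)^2 * a n)"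
  shows "(r \<longlonglongrightarrow> 1) \<longleftrightarrow> (a \<longlonglongrightarrow> 1)"
proof
  define q where "q n = (real n - 1) / real n" for n
  define t where "t n = (real n - 1) / (real n)^2" for n
  have q: "q \<longlonglongrightarrow> 1" and t: "t \<longlonglongrightarrow> 0" unfolding q_def t_def by (rule lim_qt)+
  have ev: "eventually (\<lambda>n. n \<ge> 2) sequentially" by (rule eventually_ge_at_top)
  {
    assume r: "r \<longlonglongrightarrow> 1"
    have "(\<lambda>n. r n / (q n + r n * t n)) \<longlonglongrightarrow> 1 / (1 + 1 * 0)"
      by (intro tendsto_intros r q t) simp
    moreover have "eventually (\<lambda>n. r n / (q n + r n * t n) = a n) sequentially"
      using ev
    proof eventually_elim
      case (elim n)
      have d: "1 - t n * a n > 0" and rn: "r n = q n * a n / (1 - t n * a n)"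
        using h[OF elim] by (simp_all add: q_def t_def)
      have qn: "q n > 0" using elim by (simp add: q_def)
      have "q n + r n * t n = q n / (1 - t n * a n)"
        using d by (simp add: rn field_simps)
      then have pos: "q n + r n * t n > 0" using d qn by simp
      have e2: "r n = a n * (q n + r n * t n)"
        using d rn by (simp add: field_simps)
      have "a n * (q n + r n * t n) / (q n + r n * t n) = a n" using pos by simp
      then show ?case by (simp only: e2[symmetric])
    qed
    ultimately show "a \<longlonglongrightarrow> 1" using Lim_transform_eventually by fastforce
  }
  {
    assume a: "a \<longlonglongrightarrow> 1"
    have "(\<lambda>n. q n * a n / (1 - t n * a n)) \<longlonglongrightarrow> 1 * 1 / (1 - 0 * 1)"
      by (intro tendsto_intros a q t) simp
    moreover have "eventually (\<lambda>n. q n * a n / (1 - t n * a n) = r n) sequentially"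
      using ev by eventually_elim (use h in \<open>simp add: q_def t_def\<close>)
    ultimately show "r \<longlonglongrightarrow> 1" using Lim_transform_eventually by fastforce
  }
qed



lemma alg:
  fixes sg c N :: real
  assumes N: "N \<ge> 2" and sg: "sg > 0" and B: "(sg + (N - 1) * c) / N > 0"
  shows "1 - (N - 1) / N^2 * (N * (1 - c / sg)) > 0 \<and>
    (N - 1) * (sg - c) / ((sg + (N - 1) * c) / N) = (N - 1) / N * (N * (1 - c / sg)) / (1 - (N - 1) / N^2 * (N * (1 - c / sg)))"
proof -
  have Npos: "N > 0" using N by simp
  have B': "sg + (N - 1) * c > 0" using B Npos by (simp add: zero_less_divide_iff)
  have e1: "(N - 1) / N^2 * (N * (1 - c / sg)) = (N - 1) * (sg - c) / (N * sg)"
    using Npos sg by (simp add: field_simps power2_eq_square)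
  have e2: "1 - (N - 1) * (sg - c) / (N * sg) = (sg + (N - 1) * c) / (N * sg)"
    using Npos sg by (simp add: field_simps)
  have eq: "1 - (N - 1) / N^2 * (N * (1 - c / sg)) = (sg + (N - 1) * c) / (N * sg)"
    unfolding e1 e2 ..
  have pos: "(sg + (N - 1) * c) / (N * sg) > 0" using B' Npos sg by simp
  have num: "(N - 1) / N * (N * (1 - c / sg)) = (N - 1) * (sg - c) / sg"
    using Npos sg by (simp add: field_simps)
  have gen: "b \<noteq> 0 \<Longrightarrow> a / sg / (b / (N * sg)) = a / (b / N)" for a b
    using Npos sg by (simp add: field_simps)
  have "(N - 1) * (sg - c) / sg / ((sg + (N - 1) * c) / (N * sg)) = (N - 1) * (sg - c) / ((sg + (N - 1) * c) / N)"
    by (rule gen) (use B' in simp)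
  then show ?thesis unfolding eq num using pos sg by simp
qed

theorem theorem2:
  fixes D :: "nat \<Rightarrow> real measure"
    and s :: "nat \<Rightarrow> (nat \<Rightarrow> real) \<Rightarrow> real"
  assumes prob: "\<And>n. prob_space (D n)"
    and borel: "\<And>n. sets (D n) = sets borel"
    and meas: "\<And>n. s n \<in> borel_measurable (PiM {0..<n} (\<lambda>_. borel))"
    and sym: "\<And>n x p. p permutes {0..<n} \<Longrightarrow>
               s n (\<lambda>k\<in>{0..<n}. x (p k)) = s n (\<lambda>k\<in>{0..<n}. x k)"
    and e_L2: "\<And>n. n \<ge> 2 \<Longrightarrow> integrable (dataM D n) (\<lambda>x. (econd n s 0 x)^2)"
    and e_pos: "\<And>n. n \<ge> 2 \<Longrightarrow> dVar (dataM D n) (econd n s 0) > 0"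
    and s0_pos: "\<And>n. n \<ge> 2 \<Longrightarrow> dVar (dataM D n) (szero n s) > 0"
  shows "((\<lambda>n. dE (dataM D n) (\<lambda>x. bootVar n (lstar n s x)) / dVar (dataM D n) (szero n s))
            \<longlonglongrightarrow> 1)
     \<longleftrightarrow> ((\<lambda>n. real n * (1 - dCorr (dataM D n) (econd n s 0) (econd n s 1))) \<longlonglongrightarrow> 1)"
proof -
  define r where "r = (\<lambda>n. dE (dataM D n) (\<lambda>x. bootVar n (lstar n s x)) / dVar (dataM D n) (szero n s))"
  define a where "a = (\<lambda>n. real n * (1 - dCorr (dataM D n) (econd n s 0) (econd n s 1)))"
  have key: "1 - (real n - 1) / (real n)^2 * a n > 0 \<and>
       r n = (real n - 1) / real n * a n / (1 - (real n - 1) / (real n)^2 * a n)" if n2: "n \<ge> 2" for n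
  proof -
    have L2: "integrable (dataM D n) (\<lambda>x. (econd n s 0 x)^2)" by (rule e_L2[OF n2])
    have symn: "\<forall>x p. p permutes {0..<n} \<longrightarrow> s n (\<lambda>k\<in>{0..<n}. x (p k)) = s n (\<lambda>k\<in>{0..<n}. x k)"
      using sym by blast
    note V1 = V1[where D=D and s=s and n=n, OF prob borel meas n2 L2 symn]
    note V2 = V2[where D=D and s=s and n=n, OF prob borel meas n2 L2 symn]
    note V3a = V3a[where D=D and s=s and n=n, OF prob borel meas n2 L2 symn]
    note V3b = V3b[where D=D and s=s and n=n, OF prob borel meas n2 L2 symn]
    note V3c = V3c[where D=D and s=s and n=n, OF prob borel meas n2 L2 symn]
    define mu where "mu = (\<integral>x. econd n s 0 x \<partial>dataM D n)"
    define m2 where "m2 = (\<integral>x. (econd n s 0 x)^2 \<partial>dataM D n)"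
    define m11 where "m11 = (\<integral>x. econd n s 0 x * econd n s 1 x \<partial>dataM D n)"
    define sg where "sg = m2 - mu^2"
    define c where "c = m11 - mu^2"
    have sg: "sg > 0" using e_pos[OF n2] V3a unfolding sg_def m2_def mu_def by simp
    have B: "(sg + (real n - 1) * c) / real n > 0"
    proof -
      have "(sg + (real n - 1) * c) / real n = (m2 + (real n - 1) * m11) / real n - mu^2"
        using n2 unfolding sg_def c_def by (simp add: field_simps)
      then show ?thesis using s0_pos[OF n2] V2 unfolding m2_def m11_def mu_def by simp
    qed
    have corr: "dCorr (dataM D n) (econd n s 0) (econd n s 1) = c / sg"
      unfolding dCorr_def V3a V3b V3c using sg
      by (simp add: sg_def c_def m2_def m11_def mu_def)
    have an: "a n = real n * (1 - c / sg)" unfolding a_def corr ..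
    have rn: "r n = (real n - 1) * (sg - c) / ((sg + (real n - 1) * c) / real n)"
    proof -
      have "(m2 + (real n - 1) * m11) / real n - mu^2 = (sg + (real n - 1) * c) / real n"
        using n2 unfolding sg_def c_def by (simp add: field_simps)
      moreover have "m2 - m11 = sg - c" unfolding sg_def c_def by simp
      ultimately show ?thesis unfolding r_def using V1 V2 unfolding m2_def m11_def mu_def by simp
    qed
    have N: "real n \<ge> 2" using n2 by simp
    show ?thesis unfolding an rn using alg[OF N sg B] .
  qed
  show ?thesis using abstract_lim[of a r] key unfolding r_def a_def by blast
qed


end
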